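(* Let $\lambda>0$, $p\in(0,1)$, let $B\ge1$ be an integer, $\alpha>2$, $d>0$, $\theta>0$, $R=\log(1+\theta)$, $\lambda_{max}=\frac{1}{d^2\theta^{2/\alpha}\kappa(\alpha)}$ with $\kappa(\alpha)=\frac{2\pi^2}{\alpha\sin(2\pi/\alpha)}$. Let $f_B:[0,1]\to\mathbb{R}$ be as defined in the context and $$C_B(q)=\lambda f_B(q)\exp\!\Big(-\frac{\lambda f_B(q)}{\lambda_{max}}\Big)R .$$ If there exists $\hat q\in[0,1]$ with $f_B(\hat q)=\frac{\lambda_{max}}{\lambda}$, then $q^\star=\hat q$ maximizes $C_B$ over $[0,1]$; otherwise $q^\star=1$ maximizes $C_B$ over $[0,1]$.
   Context: For $q\in(0,1]$ define $r_B(q)$ by: if $B=1$, $r_1(q)=\frac{p}{p+q-pq}$; if $B>1$ and $q\ne p$, $r_B(q)=\frac{\frac{p}{q}(1-\rho^B)}{1-\frac{p}{q}\rho^B}$ with $\rho=\frac{p(1-q)}{q(1-p)}$; if $B>1$ and $q=p$, $r_B(p)=\frac{B}{B+1-p}$. Set $f_B(q)=q\,r_B(q)$ for $q\in(0,1]$ and $f_B(0)=0$. Model: transmitters form a homogeneous Poisson point process of density $\lambda$ in $\mathbb{R}^2$, each with receiver at distance $d$, path-loss exponent $\alpha$, Rayleigh fading, success if SIR exceeds $\theta$; each transmitter harvests one energy unit per slot with probability $p$, stores it in a battery of capacity $B$, and when the battery is nonempty transmits with unit power with ALOHA probability $q$. Then $r_B(q)$ is the stationary probability that the battery is nonempty and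 $C_B(q)$ is the transmission capacity; the optimal ALOHA probability maximizes $C_B$. *)

theory Defs
  imports "HOL-Analysis.Analysis"
begin

text \<open>Stationary probability that the battery is nonempty (capacity B, harvest prob p, ALOHA prob q).\<close>
definition r_B :: "real \<Rightarrow> nat \<Rightarrow> real \<Rightarrow> real" where
  "r_B p B q =
     (if B = 1 then p / (p + q - p * q)
      else if q \<noteq> p then
        (let \<rho> = (p * (1 - q)) / (q * (1 - p))
         in ((p / q) * (1 - \<rho> ^ B)) / (1 - (p / q) * \<rho> ^ B))
      else real B / (real B + 1 - p))"

definition f_B :: "real \<Rightarrow> nat \<Rightarrow> real \<Rightarrow> real" where
  "f_B p B q = (if q = 0 then 0 else q * r_B p B q)"

definition kappa :: "real \<Rightarrow> real" where
  "kappa \<alpha> = 2 * pi ^ 2 / (\<alpha> * sin (2 * pi / \<alpha>))"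

definition lambda_max :: "real \<Rightarrow> real \<Rightarrow> real \<Rightarrow> real" where
  "lambda_max d \<theta> \<alpha> = 1 / (d ^ 2 * \<theta> powr (2 / \<alpha>) * kappa \<alpha>)"

definition C_B :: "real \<Rightarrow> real \<Rightarrow> nat \<Rightarrow> real \<Rightarrow> real \<Rightarrow> real \<Rightarrow> real \<Rightarrow> real" where
  "C_B lam p B \<alpha> d \<theta> q =
     lam * f_B p B q * exp (- lam * f_B p B q / lambda_max d \<theta> \<alpha>) * ln (1 + \<theta>)"

end

theory Submission
  imports Defs
begin

definition S_B :: "real \<Rightarrow> nat \<Rightarrow> real \<Rightarrow> real" where
 "S_B p B q = (\<Sum>i<B. (p*(1-q))^(B - Suc i) * (q*(1-p))^i)"
definition g_B :: "real \<Rightarrow> nat \<Rightarrow> real \<Rightarrow> real" where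
 "g_B p B q = p*q*S_B p B q / (q * S_B p B q + (p*(1-q))^B)"

lemma S_nonneg: "0<p \<Longrightarrow> p<1 \<Longrightarrow> 0\<le>q \<Longrightarrow> q\<le>1 \<Longrightarrow> 0 \<le> S_B p B q"
  unfolding S_B_def by (intro sum_nonneg) (simp add: mult_nonneg_nonneg)

lemma den_pos: assumes "0<p" "p<1" "0\<le>q" "q\<le>1" "B\<ge>1"
  shows "0 < q * S_B p B q + (p*(1-q))^B"
proof (cases "q = 1")
  case True
  have "S_B p B 1 = (1-p)^(B-1)"
    unfolding S_B_def using assms(5)
    by (subst sum.remove[of _ "B-1"]) (auto intro!: sum.neutral)
  then show ?thesis using True assms by (simp add: power_0_left)
next
  case False
  then have "0 < (p*(1-q))^B" using assms by simp
  moreover have "0 \<le> q * S_B p B q" using S_nonneg assms by simp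
  ultimately show ?thesis by linarith
qed

lemma f_eq_g: assumes "0<p" "p<1" "0\<le>q" "q\<le>1" "B\<ge>1"
  shows "f_B p B q = g_B p B q"
proof -
  define a where "a = p*(1-q)"
  define b where "b = q*(1-p)"
  define S where "S = S_B p B q"
  have dpos: "0 < q*S + a^B" using den_pos[OF assms] by (simp add: S_def a_def)
  have geo: "b^B - a^B = (b - a) * S"
    unfolding S_def S_B_def a_def[symmetric] b_def[symmetric] by (rule power_diff_sumr2)
  have ba: "b - a = q - p" by (simp add: a_def b_def algebra_simps)
  show ?thesis
  proof (cases "q = 0")
    case True then show ?thesis by (simp add: f_B_def g_B_def)
  next
    case q0: False
    show ?thesis
    proof (cases "B = 1")
      case True
      have "S = 1" by (simp add: S_def S_B_def True)
      then show ?thesis using q0 True dpos unfolding f_B_def g_B_def r_B_def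
        by (simp add: S_def a_def field_simps)
    next
      case B1: False
      show ?thesis
      proof (cases "q = p")
        case True
        have SB: "S = real B * (p*(1-p))^(B-1)" unfolding S_def S_B_def True
          by (simp add: power_add[symmetric] mult.commute)
        define Q where "Q = (p*(1-p))^(B-1)"
        have SQ: "S = real B * Q" using SB by (simp add: Q_def)
        have aQ: "a^B = p*(1-p) * Q"
          using assms(5) True unfolding Q_def a_def by (metis One_nat_def Suc_pred less_le_trans power_Suc zero_less_one)
        have Qpos: "Q > 0" using assms by (simp add: Q_def)
        have g: "g_B p B q = p*p*(real B*Q) / (p*(real B*Q) + p*(1-p)*Q)"
          using SQ aQ True unfolding g_B_def S_def a_def by simp
        have "g_B p B q = real B / (real B + 1 - p) * p"
        proof -
          have d: "p*(real B*Q) + p*(1-p)*Q = (p*Q)*(real B + 1 - p)" by (simp add: algebra_simps)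
          have n: "p*p*(real B*Q) = (p*Q)*(real B * p)" by (simp add: algebra_simps)
          have "p*Q \<noteq> 0" using Qpos assms by simp
          then show ?thesis unfolding g d n by simp
        qed
        moreover have "f_B p B q = p * (real B / (real B + 1 - p))"
          using True B1 assms unfolding f_B_def r_B_def by simp
        ultimately show ?thesis by simp
      next
        case qp: False
        have bpos: "b > 0" using q0 assms by (simp add: b_def)
        have rho: "(p*(1-q))/(q*(1-p)) = a/b" by (simp add: a_def b_def)
        have fe: "f_B p B q = q * ((p/q) * (1 - (a/b)^B) / (1 - (p/q)*(a/b)^B))"
          using q0 B1 qp unfolding f_B_def r_B_def rho by (simp add: Let_def)
        have bB: "b^B = a^B + (q-p)*S" using geo ba by simp
        have den: "q*b^B - p*a^B = (q-p)*(q*S + a^B)"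
          unfolding bB by (simp add: algebra_simps)
        have dnz: "q*b^B - p*a^B \<noteq> 0" unfolding den using qp dpos by simp
        have "q * ((p/q) * (1 - (a/b)^B) / (1 - (p/q)*(a/b)^B)) = p*q*(b^B - a^B) / (q*b^B - p*a^B)"
          using q0 bpos dnz by (simp add: power_divide field_simps)
        also have "q*b^B - p*a^B = (q-p)*(q*S + a^B)" by (rule den)
        also have "p*q*(b^B - a^B) = (q-p)*(p*q*S)" using geo ba by simp
        finally show ?thesis using qp fe unfolding g_B_def S_def[symmetric] a_def[symmetric] by simp
      qed
    qed
  qed
qed


lemma h_le: "(x::real) * exp (- x) \<le> exp (-1)"
proof -
  have "1 + (x - 1) \<le> exp (x - 1)" by (rule exp_ge_add_one_self)
  hence "x * exp (-x) \<le> exp (x-1) * exp (-x)" by (simp add: mult_right_mono)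
  also have "\<dots> = exp (-1)" by (simp flip: exp_add)
  finally show ?thesis .
qed

lemma h_mono: assumes "0 \<le> (x::real)" "x \<le> y" "y \<le> 1"
  shows "x * exp (- x) \<le> y * exp (- y)"
proof -
  define t where "t = y - x"
  define E where "E = exp t"
  have "1 + (-t) \<le> exp (-t)" by (rule exp_ge_add_one_self)
  hence e: "E * (1 - t) \<le> 1" unfolding E_def
    by (smt (verit, best) exp_minus_inverse exp_gt_zero mult_left_mono mult.commute)
  have Epos: "E > 0" by (simp add: E_def)
  have "x * E \<le> y"
  proof (cases "t < 1")
    case True
    have a: "x*E*(1-t) \<le> x" using mult_left_mono[OF e assms(1)] by (simp add: algebra_simps)
    have "x \<le> 1 - t" using assms t_def by simp
    hence "x*E*(1-t) \<le> 1*(1-t)" using a by simp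
    hence b: "x*E \<le> 1" using True by (metis mult_le_cancel_right diff_gt_0_iff_gt not_less)
    have c: "t*(x*E) \<le> t" using b t_def assms by (simp add: mult_left_le)
    show ?thesis using a c t_def by (simp add: algebra_simps)
  next
    case False
    then have "x = 0" using assms t_def by simp
    then show ?thesis using assms by simp
  qed
  hence "x * E * exp (-y) \<le> y * exp (-y)" by (simp add: mult_right_mono)
  moreover have "E * exp (-y) = exp (-x)" by (simp add: E_def t_def flip: exp_add)
  ultimately show ?thesis by (simp add: mult.assoc)
qed

lemma g_bounds: assumes "0<p" "p<1" "0\<le>q" "q\<le>1" "B\<ge>1"
  shows "0 \<le> g_B p B q \<and> g_B p B q \<le> p"
proof -
  have d: "0 < q * S_B p B q + (p*(1-q))^B" by (rule den_pos[OF assms])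
  have S: "0 \<le> S_B p B q" using S_nonneg assms by simp
  have n: "0 \<le> p*q*S_B p B q" using S assms by simp
  have "p*q*S_B p B q \<le> p*(q * S_B p B q + (p*(1-q))^B)"
    using assms by (simp add: algebra_simps)
  then show ?thesis using d n unfolding g_B_def by (simp add: divide_le_eq)
qed

lemma f_one: assumes "0<p" "p<1" "B\<ge>1" shows "f_B p B 1 = p"
  using assms unfolding f_B_def r_B_def by (auto simp: Let_def power_0_left)

lemma g_cont: "continuous_on {0..1} (g_B p B)" if "0<p" "p<1" "B\<ge>1"
  unfolding g_B_def S_B_def
  apply (intro continuous_intros)
  using den_pos[OF that(1,2) _ _ that(3)] unfolding S_B_def by (simp add: less_le)

lemma lmax_pos: assumes "\<alpha> > 2" "d > 0" "\<theta> > 0" shows "lambda_max d \<theta> \<alpha> > 0"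
proof -
  have "2*pi/\<alpha> < pi" using assms pi_gt_zero by (simp add: divide_less_eq)
  hence "sin (2*pi/\<alpha>) > 0" using assms by (intro sin_gt_zero) auto
  hence "kappa \<alpha> > 0" using assms unfolding kappa_def by simp
  thus ?thesis using assms unfolding lambda_max_def by simp
qed

theorem theorem2:
  fixes lam p \<alpha> d \<theta> :: real and B :: nat
  assumes "lam > 0" and "0 < p" and "p < 1" and "B \<ge> 1"
    and "\<alpha> > 2" and "d > 0" and "\<theta> > 0"
  shows "((\<exists>qh\<in>{0..1}. f_B p B qh = lambda_max d \<theta> \<alpha> / lam) \<longrightarrow>
            (\<forall>qh\<in>{0..1}. f_B p B qh = lambda_max d \<theta> \<alpha> / lam \<longrightarrow>
               (\<forall>q\<in>{0..1}. C_B lam p B \<alpha> d \<theta> q \<le> C_B lam p B \<alpha> d \<theta> qh)))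
       \<and> ((\<not> (\<exists>qh\<in>{0..1}. f_B p B qh = lambda_max d \<theta> \<alpha> / lam)) \<longrightarrow>
            (\<forall>q\<in>{0..1}. C_B lam p B \<alpha> d \<theta> q \<le> C_B lam p B \<alpha> d \<theta> 1))"
proof -
  define L where "L = lambda_max d \<theta> \<alpha>"
  define K where "K = ln (1 + \<theta>)"
  have Lpos: "L > 0" unfolding L_def using lmax_pos assms by simp
  have Kpos: "K > 0" unfolding K_def using assms by simp
  define x where "x = (\<lambda>q. lam * f_B p B q / L)"
  have Ceq: "C_B lam p B \<alpha> d \<theta> q = L * K * (x q * exp (- x q))" for q
    unfolding C_B_def x_def L_def[symmetric] K_def[symmetric] using Lpos by (simp add: field_simps)
  have LK: "L * K > 0" using Lpos Kpos by simp
  have part1: "\<forall>q\<in>{0..1}. C_B lam p B \<alpha> d \<theta> q \<le> C_B lam p B \<alpha> d \<theta> qh"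
    if "f_B p B qh = L / lam" for qh
  proof
    fix q
    have "x qh = 1" unfolding x_def that using assms Lpos by simp
    hence "x q * exp (- x q) \<le> x qh * exp (- x qh)" using h_le by simp
    thus "C_B lam p B \<alpha> d \<theta> q \<le> C_B lam p B \<alpha> d \<theta> qh" unfolding Ceq using LK by (simp add: mult_left_mono)
  qed
  have part2: "\<forall>q\<in>{0..1}. C_B lam p B \<alpha> d \<theta> q \<le> C_B lam p B \<alpha> d \<theta> 1"
    if no: "\<not> (\<exists>qh\<in>{0..1}. f_B p B qh = L / lam)"
  proof -
    have "p < L / lam"
    proof (rule ccontr)
      assume "\<not> p < L / lam"
      hence le: "L/lam \<le> g_B p B 1" using f_eq_g[of p 1 B] f_one[of p B] assms by simp
      have "g_B p B 0 \<le> L/lam" using Lpos assms by (simp add: g_B_def)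
      then obtain z where z: "0 \<le> z" "z \<le> 1" "g_B p B z = L/lam"
        using IVT'[of "g_B p B" 0 "L/lam" 1, OF _ le _ g_cont] assms by auto
      hence "f_B p B z = L/lam" using f_eq_g assms by simp
      thus False using no z by auto
    qed
    hence x1: "x 1 < 1" unfolding x_def using f_one[of p B] assms Lpos
      by (simp add: divide_less_eq mult.commute pos_less_divide_eq)
    show ?thesis
    proof
      fix q :: real assume q: "q \<in> {0..1}"
      have b: "0 \<le> f_B p B q \<and> f_B p B q \<le> f_B p B 1"
        using g_bounds[of p q B] f_eq_g[of p q B] f_one[of p B] q assms by auto
      have "0 \<le> x q" "x q \<le> x 1" unfolding x_def using b assms Lpos
        by (auto intro!: divide_right_mono mult_left_mono)
      hence "x q * exp (- x q) \<le> x 1 * exp (- x 1)" using h_mono x1 by simp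
      thus "C_B lam p B \<alpha> d \<theta> q \<le> C_B lam p B \<alpha> d \<theta> 1" unfolding Ceq using LK by (simp add: mult_left_mono)
    qed
  qed
  show ?thesis using part1 part2 unfolding L_def by blast
qed

end
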